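(* If $\mu\preceq\mu'$ and $v$ is a move on an interval $[a,b]$ that can be applied to $\mu$, then $v\mu\preceq\bar v\mu'$, where $\bar v$ is the extreme move on $[a,b]$.
   Context: A distribution is a finite set $\{(x_1,m_1),\dots,(x_k,m_k)\}$, $m_i>0$; $\mu(A)=\sum_{x_i\in A}m_i$; $M_j[\mu]=\sum_im_ix_i^j$. A move $v=([a,b],\delta)$ has $\delta$ a signed distribution on $[a,b]$ with $M_0[\delta]=M_1[\delta]=0$; it applies to $\mu$ if $\mu+\delta$ is a distribution, and $v\mu=\mu+\delta$. The extreme move $\bar v$ on $[a,b]$ maps any distribution $\mu$ to the distribution $\mu'$ with $\mu'\{a<x<b\}=0$, $\mu'(\{x\})=\mu(\{x\})$ for $x\notin[a,b]$, and $M_0[\mu']=M_0[\mu]$, $M_1[\mu']=M_1[\mu]$. $\mu'$ is a basic split of $\mu$ if obtained by replacing one point mass $(x_i,m_i)$ by finitely many point masses of total mass $m_i$ and center of mass $x_i$; $\mu\preceq\mu'$ if $\mu'$ is obtained from $\mu$ by zero or more basic splits. *)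

theory Defs
  imports Complex_Main
begin

text \<open>A (signed) distribution on the real line is represented by its mass function
  \<open>\<mu> :: real \<Rightarrow> real\<close>, \<open>\<mu> x\<close> being the mass at the point \<open>x\<close>; the support is finite.
  A distribution has nonnegative masses (the points of positive mass are the
  pairs \<open>(x_i, m_i)\<close>).\<close>

definition supp :: "(real \<Rightarrow> real) \<Rightarrow> real set" where
  "supp \<mu> = {x. \<mu> x \<noteq> 0}"

definition signed_distribution :: "(real \<Rightarrow> real) \<Rightarrow> bool" where
  "signed_distribution \<mu> \<longleftrightarrow> finite (supp \<mu>)"

definition distribution :: "(real \<Rightarrow> real) \<Rightarrow> bool" where
  "distribution \<mu> \<longleftrightarrow> finite (supp \<mu>) \<and> (\<forall>x. 0 \<le> \<mu> x)"

definition moment :: "nat \<Rightarrow> (real \<Rightarrow> real) \<Rightarrow> real" where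
  "moment j \<mu> = (\<Sum>x\<in>supp \<mu>. \<mu> x * x ^ j)"

definition is_move :: "real \<Rightarrow> real \<Rightarrow> (real \<Rightarrow> real) \<Rightarrow> bool" where
  "is_move a b \<delta> \<longleftrightarrow> signed_distribution \<delta> \<and> supp \<delta> \<subseteq> {a..b}
      \<and> moment 0 \<delta> = 0 \<and> moment 1 \<delta> = 0"

definition move_applies :: "(real \<Rightarrow> real) \<Rightarrow> (real \<Rightarrow> real) \<Rightarrow> bool" where
  "move_applies \<delta> \<mu> \<longleftrightarrow> distribution (\<lambda>x. \<mu> x + \<delta> x)"

definition apply_move :: "(real \<Rightarrow> real) \<Rightarrow> (real \<Rightarrow> real) \<Rightarrow> (real \<Rightarrow> real)" where
  "apply_move \<delta> \<mu> = (\<lambda>x. \<mu> x + \<delta> x)"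

text \<open>\<open>extreme_result a b \<mu> \<mu>'\<close>: \<open>\<mu>'\<close> is the result of applying the extreme move on \<open>[a,b]\<close>
  to \<open>\<mu>\<close> (this determines \<open>\<mu>'\<close> uniquely).\<close>
definition extreme_result :: "real \<Rightarrow> real \<Rightarrow> (real \<Rightarrow> real) \<Rightarrow> (real \<Rightarrow> real) \<Rightarrow> bool" where
  "extreme_result a b \<mu> \<mu>' \<longleftrightarrow> distribution \<mu>'
      \<and> (\<forall>x. a < x \<and> x < b \<longrightarrow> \<mu>' x = 0)
      \<and> (\<forall>x. x \<notin> {a..b} \<longrightarrow> \<mu>' x = \<mu> x)
      \<and> moment 0 \<mu>' = moment 0 \<mu> \<and> moment 1 \<mu>' = moment 1 \<mu>"

definition basic_split :: "(real \<Rightarrow> real) \<Rightarrow> (real \<Rightarrow> real) \<Rightarrow> bool" where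
  "basic_split \<mu> \<mu>' \<longleftrightarrow> distribution \<mu> \<and>
     (\<exists>x \<nu>. 0 < \<mu> x \<and> distribution \<nu> \<and> moment 0 \<nu> = \<mu> x \<and> moment 1 \<nu> = x * \<mu> x
        \<and> \<mu>' = (\<lambda>y. (if y = x then 0 else \<mu> y) + \<nu> y))"

definition split_le :: "(real \<Rightarrow> real) \<Rightarrow> (real \<Rightarrow> real) \<Rightarrow> bool" (infix "\<preceq>\<^sub>s" 50) where
  "\<mu> \<preceq>\<^sub>s \<mu>' \<longleftrightarrow> basic_split\<^sup>*\<^sup>* \<mu> \<mu>'"

end

theory Submission
  imports Defs
begin



definition pt :: "real \<Rightarrow> real \<Rightarrow> real \<Rightarrow> real" where
  "pt x m = (\<lambda>y. if y = x then m else 0)"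

lemma supp_pt: "supp (pt x m) \<subseteq> {x}"
  by (auto simp: supp_def pt_def)

lemma fin_pt[simp]: "finite (supp (pt x m))"
  using supp_pt finite_subset by blast

lemma fin_add: "finite (supp f) \<Longrightarrow> finite (supp g) \<Longrightarrow> finite (supp (\<lambda>y. f y + g y))"
  by (rule finite_subset[of _ "supp f \<union> supp g"]) (auto simp: supp_def)

lemma fin_diff: "finite (supp f) \<Longrightarrow> finite (supp g) \<Longrightarrow> finite (supp (\<lambda>y. f y - g y))"
  by (rule finite_subset[of _ "supp f \<union> supp g"]) (auto simp: supp_def)

lemma sum_supp_S:
  assumes "finite S" "supp f \<subseteq> S"
  shows "(\<Sum>y\<in>supp f \<inter> T. f y * g y) = (\<Sum>y\<in>S \<inter> T. f y * g y)"
  by (rule sum.mono_neutral_left) (use assms in \<open>auto simp: supp_def\<close>)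

lemma moment_S:
  assumes "finite S" "supp f \<subseteq> S"
  shows "moment j f = (\<Sum>y\<in>S. f y * y ^ j)"
  unfolding moment_def
  by (rule sum.mono_neutral_left) (use assms in \<open>auto simp: supp_def\<close>)

lemma moment_add:
  assumes "finite (supp f)" "finite (supp g)"
  shows "moment j (\<lambda>y. f y + g y) = moment j f + moment j g"
proof -
  let ?S = "supp f \<union> supp g"
  have "moment j (\<lambda>y. f y + g y) = (\<Sum>y\<in>?S. (f y + g y) * y ^ j)"
    by (rule moment_S) (use assms in \<open>auto simp: supp_def\<close>)
  also have "\<dots> = (\<Sum>y\<in>?S. f y * y ^ j) + (\<Sum>y\<in>?S. g y * y ^ j)"
    by (simp add: distrib_right sum.distrib)
  also have "\<dots> = moment j f + moment j g"
    using assms by (simp add: moment_S[of ?S f] moment_S[of ?S g] supp_def)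
  finally show ?thesis .
qed

lemma moment_diff:
  assumes "finite (supp f)" "finite (supp g)"
  shows "moment j (\<lambda>y. f y - g y) = moment j f - moment j g"
proof -
  let ?S = "supp f \<union> supp g"
  have "moment j (\<lambda>y. f y - g y) = (\<Sum>y\<in>?S. (f y - g y) * y ^ j)"
    by (rule moment_S) (use assms in \<open>auto simp: supp_def\<close>)
  also have "\<dots> = (\<Sum>y\<in>?S. f y * y ^ j) - (\<Sum>y\<in>?S. g y * y ^ j)"
    by (simp add: left_diff_distrib sum_subtractf)
  also have "\<dots> = moment j f - moment j g"
    using assms by (simp add: moment_S[of ?S f] moment_S[of ?S g] supp_def)
  finally show ?thesis .
qed

lemma moment_pt: "moment j (pt x m) = m * x ^ j"
proof -
  have "moment j (pt x m) = (\<Sum>y\<in>{x}. pt x m y * y ^ j)"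
    by (rule moment_S) (use supp_pt in auto)
  then show ?thesis by (simp add: pt_def)
qed

lemma split_point:
  assumes "distribution \<rho>" "distribution \<nu>" "moment 0 \<nu> = m" "moment 1 \<nu> = m * x" "m > 0"
  shows "(\<lambda>y. \<rho> y + pt x m y) \<preceq>\<^sub>s (\<lambda>y. \<rho> y + \<nu> y)"
proof -
  let ?\<mu> = "\<lambda>y. \<rho> y + pt x m y"
  let ?\<nu> = "\<lambda>y. \<nu> y + pt x (\<rho> x) y"
  have fr: "finite (supp \<rho>)" and fn: "finite (supp \<nu>)" and nr: "\<And>y. 0 \<le> \<rho> y" and nn: "\<And>y. 0 \<le> \<nu> y"
    using assms(1,2) by (auto simp: distribution_def)
  have d\<mu>: "distribution ?\<mu>"
    unfolding distribution_def using fr nr assms(5)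
    by (intro conjI fin_add fin_pt) (auto simp: pt_def)
  have dn: "distribution ?\<nu>"
    unfolding distribution_def using fn nn nr
    by (intro conjI fin_add fin_pt) (auto simp: pt_def)
  have "moment 0 ?\<nu> = \<rho> x + m" using assms(3) fn by (simp add: moment_add moment_pt)
  moreover have "moment 1 ?\<nu> = x * (\<rho> x + m)" using assms(4) fn
    by (simp add: moment_add moment_pt algebra_simps)
  moreover have "0 < ?\<mu> x" using nr assms(5) by (simp add: pt_def add_nonneg_pos)
  moreover have "(\<lambda>y. \<rho> y + \<nu> y) = (\<lambda>y. (if y = x then 0 else ?\<mu> y) + ?\<nu> y)"
    by (auto simp: pt_def)
  ultimately have "basic_split ?\<mu> (\<lambda>y. \<rho> y + \<nu> y)"
    unfolding basic_split_def using d\<mu> dn by (auto simp: pt_def)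
  then show ?thesis unfolding split_le_def by simp
qed

lemma split_le_trans: "\<mu> \<preceq>\<^sub>s \<mu>' \<Longrightarrow> \<mu>' \<preceq>\<^sub>s \<mu>'' \<Longrightarrow> \<mu> \<preceq>\<^sub>s \<mu>''"
  unfolding split_le_def by (rule rtranclp_trans)

lemma split_le_refl: "\<mu> \<preceq>\<^sub>s \<mu>"
  unfolding split_le_def by simp

lemma basic_split_dist: "basic_split \<mu> \<mu>' \<Longrightarrow> distribution \<mu>'"
proof -
  assume "basic_split \<mu> \<mu>'"
  then obtain x \<nu> where d: "distribution \<mu>" "distribution \<nu>"
    and e: "\<mu>' = (\<lambda>y. (if y = x then 0 else \<mu> y) + \<nu> y)"
    unfolding basic_split_def by blast
  have "supp \<mu>' \<subseteq> supp \<mu> \<union> supp \<nu>" unfolding e supp_def by auto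
  then show ?thesis using d unfolding distribution_def e
    by (auto intro: finite_subset add_nonneg_nonneg)
qed

lemma split_le_dist: "\<mu> \<preceq>\<^sub>s \<mu>' \<Longrightarrow> distribution \<mu> \<Longrightarrow> distribution \<mu>'"
  unfolding split_le_def by (induction rule: rtranclp_induct) (auto intro: basic_split_dist)



definition cA :: "real \<Rightarrow> real \<Rightarrow> (real \<Rightarrow> real) \<Rightarrow> real" where
  "cA a b f = (\<Sum>y\<in>supp f \<inter> {a<..<b}. f y * (b - y)) / (b - a)"
definition cB :: "real \<Rightarrow> real \<Rightarrow> (real \<Rightarrow> real) \<Rightarrow> real" where
  "cB a b f = (\<Sum>y\<in>supp f \<inter> {a<..<b}. f y * (y - a)) / (b - a)"
definition E :: "real \<Rightarrow> real \<Rightarrow> (real \<Rightarrow> real) \<Rightarrow> real \<Rightarrow> real" where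
  "E a b f = (\<lambda>y. (if a < y \<and> y < b then 0 else f y) + pt a (cA a b f) y + pt b (cB a b f) y)"

lemma cA_S: "finite S \<Longrightarrow> supp f \<subseteq> S \<Longrightarrow> cA a b f = (\<Sum>y\<in>S \<inter> {a<..<b}. f y * (b - y)) / (b - a)"
  unfolding cA_def by (simp add: sum_supp_S)
lemma cB_S: "finite S \<Longrightarrow> supp f \<subseteq> S \<Longrightarrow> cB a b f = (\<Sum>y\<in>S \<inter> {a<..<b}. f y * (y - a)) / (b - a)"
  unfolding cB_def by (simp add: sum_supp_S)

lemma E_add:
  assumes "finite (supp f)" "finite (supp g)"
  shows "E a b (\<lambda>y. f y + g y) = (\<lambda>y. E a b f y + E a b g y)"
proof -
  let ?S = "supp f \<union> supp g"
  have fS: "finite ?S" using assms by simp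
  have s: "supp (\<lambda>y. f y + g y) \<subseteq> ?S" by (auto simp: supp_def)
  have "cA a b (\<lambda>y. f y + g y) = (\<Sum>y\<in>?S \<inter> {a<..<b}. (f y + g y) * (b - y)) / (b - a)"
    by (rule cA_S[OF fS s])
  also have "\<dots> = cA a b f + cA a b g"
    by (simp only: cA_S[OF fS Un_upper1] cA_S[OF fS Un_upper2] distrib_right sum.distrib add_divide_distrib)
  finally have 1: "cA a b (\<lambda>y. f y + g y) = cA a b f + cA a b g" .
  have "cB a b (\<lambda>y. f y + g y) = (\<Sum>y\<in>?S \<inter> {a<..<b}. (f y + g y) * (y - a)) / (b - a)"
    by (rule cB_S[OF fS s])
  also have "\<dots> = cB a b f + cB a b g"
    by (simp only: cB_S[OF fS Un_upper1] cB_S[OF fS Un_upper2] distrib_right sum.distrib add_divide_distrib)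
  finally have 2: "cB a b (\<lambda>y. f y + g y) = cB a b f + cB a b g" .
  show ?thesis unfolding E_def 1 2 by (auto simp: pt_def)
qed

lemma supp_E: "supp (E a b f) \<subseteq> supp f \<union> {a, b}"
  unfolding E_def supp_def pt_def by auto

lemma fin_E: "finite (supp f) \<Longrightarrow> finite (supp (E a b f))"
  using supp_E finite_subset by (metis finite.insertI finite_Un finite.emptyI)

lemma E_dist:
  assumes "a < b" "distribution f"
  shows "distribution (E a b f)"
proof -
  have n: "\<And>y. 0 \<le> f y" using assms(2) by (simp add: distribution_def)
  have "0 \<le> cA a b f" unfolding cA_def using assms(1) n
    by (intro divide_nonneg_pos sum_nonneg) auto
  moreover have "0 \<le> cB a b f" unfolding cB_def using assms(1) n
    by (intro divide_nonneg_pos sum_nonneg) auto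
  moreover have "finite (supp (E a b f))" using assms(2) fin_E by (simp add: distribution_def)
  ultimately show ?thesis using n unfolding distribution_def
    by (auto simp: E_def pt_def)
qed

lemma E_in: "a < y \<Longrightarrow> y < b \<Longrightarrow> E a b f y = 0"
  unfolding E_def pt_def by auto

lemma E_out: "a < b \<Longrightarrow> y \<notin> {a..b} \<Longrightarrow> E a b f y = f y"
  unfolding E_def pt_def by auto

lemma E_fix:
  assumes "\<And>y. a < y \<Longrightarrow> y < b \<Longrightarrow> f y = 0"
  shows "E a b f = f"
proof -
  have "supp f \<inter> {a<..<b} = {}" using assms by (auto simp: supp_def)
  then have "cA a b f = 0" "cB a b f = 0" unfolding cA_def cB_def by simp_all
  then show ?thesis unfolding E_def using assms by (auto simp: pt_def)
qed

lemma E_pt_out: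
  assumes "\<not> (a < x \<and> x < b)"
  shows "E a b (pt x m) = pt x m"
  by (rule E_fix) (use assms in \<open>auto simp: pt_def\<close>)

definition coll :: "real \<Rightarrow> real \<Rightarrow> real \<Rightarrow> real \<Rightarrow> real \<Rightarrow> real" where
  "coll a b m x = (\<lambda>y. pt a (m * (b - x) / (b - a)) y + pt b (m * (x - a) / (b - a)) y)"

lemma E_pt_in:
  assumes "a < x" "x < b"
  shows "E a b (pt x m) = coll a b m x"
proof -
  have "cA a b (pt x m) = m * (b - x) / (b - a)"
    using cA_S[of "{x}" "pt x m"] supp_pt assms by (simp add: pt_def)
  moreover have "cB a b (pt x m) = m * (x - a) / (b - a)"
    using cB_S[of "{x}" "pt x m"] supp_pt assms by (simp add: pt_def)
  ultimately show ?thesis unfolding E_def coll_def using assms by (auto simp: pt_def)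
qed

lemma E_moment:
  assumes "a < b" "finite (supp f)" "j \<le> 1"
  shows "moment j (E a b f) = moment j f"
proof -
  let ?T = "supp f \<inter> {a<..<b}"
  define fo where "fo = (\<lambda>y. if a < y \<and> y < b then 0 else f y)"
  define fi where "fi = (\<lambda>y. if a < y \<and> y < b then f y else 0)"
  have ffo: "finite (supp fo)" by (rule finite_subset[OF _ assms(2)]) (auto simp: fo_def supp_def)
  have ffi: "finite (supp fi)" by (rule finite_subset[OF _ assms(2)]) (auto simp: fi_def supp_def)
  have "f = (\<lambda>y. fo y + fi y)" by (auto simp: fo_def fi_def)
  then have m1: "moment j f = moment j fo + moment j fi"
    using moment_add[OF ffo ffi] by simp
  have "moment j fi = (\<Sum>y\<in>supp f. fi y * y ^ j)"
    by (rule moment_S[OF assms(2)]) (auto simp: fi_def supp_def)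
  also have "\<dots> = (\<Sum>y\<in>supp f. if y \<in> {a<..<b} then f y * y ^ j else 0)"
    by (rule sum.cong) (auto simp: fi_def)
  also have "\<dots> = (\<Sum>y\<in>?T. f y * y ^ j)"
    using assms(2) by (simp add: sum.inter_restrict)
  finally have m2: "moment j fi = (\<Sum>y\<in>?T. f y * y ^ j)" .
  have "E a b f = (\<lambda>y. (\<lambda>y. fo y + pt a (cA a b f) y) y + pt b (cB a b f) y)"
    unfolding E_def fo_def by simp
  then have m3: "moment j (E a b f) = moment j fo + cA a b f * a ^ j + cB a b f * b ^ j"
    by (simp add: moment_add fin_add ffo moment_pt)
  have "cA a b f * a ^ j + cB a b f * b ^ j =
      (\<Sum>y\<in>?T. f y * (b - y) * a ^ j / (b - a) + f y * (y - a) * b ^ j / (b - a))"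
    unfolding cA_def cB_def sum.distrib
    by (simp add: sum_distrib_right sum_divide_distrib)
  also have "\<dots> = (\<Sum>y\<in>?T. f y * y ^ j)"
  proof (rule sum.cong)
    fix y
    have "b - a \<noteq> 0" using assms(1) by simp
    have j: "j = 0 \<or> j = 1" using assms(3) by auto
    have e: "f y * (b - y) * a ^ j + f y * (y - a) * b ^ j = f y * y ^ j * (b - a)"
      using j by (auto simp: algebra_simps)
    show "f y * (b - y) * a ^ j / (b - a) + f y * (y - a) * b ^ j / (b - a) = f y * y ^ j"
      unfolding add_divide_distrib[symmetric] e using \<open>b - a \<noteq> 0\<close> by simp
  qed simp
  finally show ?thesis using m1 m2 m3 by simp
qed

lemma two_point_zero:
  assumes "a < b" "finite (supp g)" "\<And>y. y \<noteq> a \<Longrightarrow> y \<noteq> b \<Longrightarrow> g y = 0"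
    "moment 0 g = 0" "moment 1 g = 0"
  shows "g y = 0"
proof -
  have S: "supp g \<subseteq> {a, b}" using assms(3) by (auto simp: supp_def)
  have "moment 0 g = g a + g b" using moment_S[OF _ S, of 0] assms(1) by simp
  moreover have "moment 1 g = g a * a + g b * b" using moment_S[OF _ S, of 1] assms(1) by simp
  ultimately have "g a + g b = 0" "g a * a + g b * b = 0" using assms(4,5) by auto
  then have gb: "g b = - g a" by linarith
  have "g a * (a - b) = 0" using \<open>g a * a + g b * b = 0\<close> unfolding gb by (simp add: algebra_simps)
  then have "g a = 0" "g b = 0" using assms(1) \<open>g a + g b = 0\<close> by auto
  then show ?thesis using assms(3) by (cases "y = a \<or> y = b") auto
qed



lemma dist_pt: "0 \<le> m \<Longrightarrow> distribution (pt x m)"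
  unfolding distribution_def by (intro conjI fin_pt) (auto simp: pt_def)

lemma coll_props:
  assumes "a < x" "x < b" "0 \<le> m"
  shows "distribution (coll a b m x)" "moment 0 (coll a b m x) = m"
    "moment 1 (coll a b m x) = m * x" "\<And>y. a < y \<Longrightarrow> y < b \<Longrightarrow> coll a b m x y = 0"
proof -
  have ab: "a < b" using assms by simp
  have dp: "distribution (pt x m)" using assms(3) by (rule dist_pt)
  show "distribution (coll a b m x)"
    using E_dist[OF ab dp] E_pt_in[OF assms(1,2)] by simp
  show "moment 0 (coll a b m x) = m"
    using E_moment[OF ab fin_pt, of 0 x m] E_pt_in[OF assms(1,2)] by (simp add: moment_pt)
  show "moment 1 (coll a b m x) = m * x"
    using E_moment[OF ab fin_pt, of 1 x m] E_pt_in[OF assms(1,2)] by (simp add: moment_pt)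
  fix y assume "a < y" "y < b" then show "coll a b m x y = 0"
    by (simp add: coll_def pt_def)
qed

lemma E_split:
  assumes ab: "a < b"
  shows "distribution \<sigma> \<Longrightarrow> \<sigma> \<preceq>\<^sub>s E a b \<sigma>"
proof (induct "card (supp \<sigma> \<inter> {a<..<b})" arbitrary: \<sigma> rule: less_induct)
  case less
  have f\<sigma>: "finite (supp \<sigma>)" and n\<sigma>: "\<And>y. 0 \<le> \<sigma> y" using less.prems by (auto simp: distribution_def)
  show ?case
  proof (cases "supp \<sigma> \<inter> {a<..<b} = {}")
    case True
    then have "E a b \<sigma> = \<sigma>" by (intro E_fix) (auto simp: supp_def)
    then show ?thesis by (simp add: split_le_refl)
  next
    case False
    then obtain y where y: "y \<in> supp \<sigma>" "a < y" "y < b" by auto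
    define m where "m = \<sigma> y"
    have m: "0 < m" using y(1) n\<sigma>[of y] by (auto simp: m_def supp_def)
    define \<sigma>0 where "\<sigma>0 = (\<lambda>z. if z = y then 0 else \<sigma> z)"
    have d0: "distribution \<sigma>0" unfolding distribution_def
      using n\<sigma> by (auto simp: \<sigma>0_def intro: finite_subset[OF _ f\<sigma>] simp: supp_def)
    have f0: "finite (supp \<sigma>0)" using d0 by (simp add: distribution_def)
    have e\<sigma>: "\<sigma> = (\<lambda>z. \<sigma>0 z + pt y m z)" by (auto simp: \<sigma>0_def pt_def m_def)
    define \<sigma>1 where "\<sigma>1 = (\<lambda>z. \<sigma>0 z + coll a b m y z)"
    note cp = coll_props[OF y(2,3) less_imp_le[OF m]]
    have s1: "\<sigma> \<preceq>\<^sub>s \<sigma>1"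
      using split_point[OF d0 cp(1,2,3) m] e\<sigma> \<sigma>1_def by simp
    have d1: "distribution \<sigma>1" unfolding \<sigma>1_def using d0 cp(1)
      by (auto simp: distribution_def intro: fin_add)
    have fc: "finite (supp (coll a b m y))" using cp(1) by (simp add: distribution_def)
    have "E a b \<sigma>1 = (\<lambda>z. E a b \<sigma>0 z + E a b (coll a b m y) z)"
      unfolding \<sigma>1_def by (rule E_add[OF f0 fc])
    also have "E a b (coll a b m y) = E a b (pt y m)"
      using E_fix[of a b "coll a b m y"] cp(4) E_pt_in[OF y(2,3)] by simp
    also have "(\<lambda>z. E a b \<sigma>0 z + E a b (pt y m) z) = E a b \<sigma>"
      using E_add[OF f0 fin_pt, of a b y m] e\<sigma> by simp
    finally have eE: "E a b \<sigma>1 = E a b \<sigma>" .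
    have "supp \<sigma>1 \<inter> {a<..<b} = supp \<sigma> \<inter> {a<..<b} - {y}"
      using cp(4) by (auto simp: \<sigma>1_def \<sigma>0_def supp_def)
    moreover have "y \<in> supp \<sigma> \<inter> {a<..<b}" using y by simp
    ultimately have "card (supp \<sigma>1 \<inter> {a<..<b}) < card (supp \<sigma> \<inter> {a<..<b})"
      using card_Diff1_less[OF finite_Int[OF disjI1[OF f\<sigma>]]] by simp
    then have "\<sigma>1 \<preceq>\<^sub>s E a b \<sigma>1" using less.hyps d1 by blast
    then show ?thesis using s1 eE split_le_trans by metis
  qed
qed



definition upd :: "(real \<Rightarrow> real) \<Rightarrow> real \<Rightarrow> real \<Rightarrow> real \<Rightarrow> real \<Rightarrow> real \<Rightarrow> real \<Rightarrow> real" where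
  "upd \<tau> p s q t e = (\<lambda>y. \<tau> y - pt p s y - pt q t y + pt e (s + t) y)"

lemma upd_dist:
  assumes "distribution \<tau>" "p \<noteq> q" "0 \<le> s" "0 \<le> t" "s \<le> \<tau> p" "t \<le> \<tau> q"
  shows "distribution (upd \<tau> p s q t e)"
proof -
  have f: "finite (supp \<tau>)" and n: "\<And>y. 0 \<le> \<tau> y" using assms(1) by (auto simp: distribution_def)
  have "finite (supp (upd \<tau> p s q t e))" unfolding upd_def
    by (intro fin_add fin_diff fin_pt f)
  moreover have "0 \<le> upd \<tau> p s q t e y" for y
    using n[of y] assms by (auto simp: upd_def pt_def)
  ultimately show ?thesis by (simp add: distribution_def)
qed

lemma upd_moment:
  assumes "finite (supp \<tau>)" "p * s + q * t = e * (s + t)"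
  shows "moment 0 (upd \<tau> p s q t e) = moment 0 \<tau>" "moment 1 (upd \<tau> p s q t e) = moment 1 \<tau>"
proof -
  have h: "moment j (upd \<tau> p s q t e) = moment j \<tau> - s * p ^ j - t * q ^ j + (s + t) * e ^ j" for j
    unfolding upd_def using assms(1)
    by (simp add: moment_add moment_diff fin_add fin_diff moment_pt)
  show "moment 0 (upd \<tau> p s q t e) = moment 0 \<tau>" using h[of 0] by simp
  show "moment 1 (upd \<tau> p s q t e) = moment 1 \<tau>" using h[of 1] assms(2) by (simp add: algebra_simps)
qed

lemma upd_step:
  assumes "distribution \<rho>" "distribution \<tau>" "p \<noteq> q" "0 \<le> s" "0 \<le> t" "0 < s + t"
    "s \<le> \<tau> p" "t \<le> \<tau> q" "p * s + q * t = e * (s + t)"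
  shows "(\<lambda>y. \<rho> y + upd \<tau> p s q t e y) \<preceq>\<^sub>s (\<lambda>y. \<rho> y + \<tau> y)"
proof -
  have fr: "finite (supp \<rho>)" and nr: "\<And>y. 0 \<le> \<rho> y" using assms(1) by (auto simp: distribution_def)
  have f: "finite (supp \<tau>)" and n: "\<And>y. 0 \<le> \<tau> y" using assms(2) by (auto simp: distribution_def)
  define R where "R = (\<lambda>y. \<rho> y + (\<tau> y - pt p s y - pt q t y))"
  define \<nu> where "\<nu> = (\<lambda>y. pt p s y + pt q t y)"
  have dR: "distribution R"
  proof -
    have "finite (supp R)" unfolding R_def by (intro fin_add fin_diff fin_pt f fr)
    moreover have "0 \<le> R y" for y using nr[of y] n[of y] assms by (auto simp: R_def pt_def)
    ultimately show ?thesis by (simp add: distribution_def)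
  qed
  have dn: "distribution \<nu>"
  proof -
    have "finite (supp \<nu>)" unfolding \<nu>_def by (intro fin_add fin_pt)
    moreover have "0 \<le> \<nu> y" for y using assms by (auto simp: \<nu>_def pt_def)
    ultimately show ?thesis by (simp add: distribution_def)
  qed
  have m0: "moment 0 \<nu> = s + t" unfolding \<nu>_def by (simp add: moment_add moment_pt)
  have m1: "moment 1 \<nu> = (s + t) * e" unfolding \<nu>_def using assms(9)
    by (simp add: moment_add moment_pt algebra_simps)
  have "(\<lambda>y. R y + pt e (s + t) y) \<preceq>\<^sub>s (\<lambda>y. R y + \<nu> y)"
    by (rule split_point[OF dR dn m0 m1 assms(6)])
  moreover have "(\<lambda>y. R y + pt e (s + t) y) = (\<lambda>y. \<rho> y + upd \<tau> p s q t e y)"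
    by (simp add: R_def upd_def algebra_simps)
  moreover have "(\<lambda>y. R y + \<nu> y) = (\<lambda>y. \<rho> y + \<tau> y)"
    by (simp add: R_def \<nu>_def)
  ultimately show ?thesis by simp
qed

lemma upd_supp_out:
  assumes "distribution \<tau>" "0 \<le> t" "t \<le> \<tau> q" "0 \<le> s" "s \<le> \<tau> p" "e \<in> {a..b}"
  shows "supp (upd \<tau> p s q t e) - {a..b} \<subseteq> supp \<tau> - {a..b}"
  using assms by (auto simp: supp_def upd_def pt_def split: if_splits)

lemma upd_card:
  assumes "distribution \<tau>" "0 \<le> t" "t \<le> \<tau> q" "0 \<le> s" "s \<le> \<tau> p" "e \<in> {a..b}"
    "z \<in> supp \<tau> - {a..b}" "upd \<tau> p s q t e z = 0"
  shows "card (supp (upd \<tau> p s q t e) - {a..b}) < card (supp \<tau> - {a..b})"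
proof -
  have f: "finite (supp \<tau> - {a..b})" using assms(1) by (simp add: distribution_def)
  have "supp (upd \<tau> p s q t e) - {a..b} \<subseteq> supp \<tau> - {a..b} - {z}"
    using upd_supp_out[OF assms(1-6)] assms(8) by (auto simp: supp_def)
  then have "card (supp (upd \<tau> p s q t e) - {a..b}) \<le> card (supp \<tau> - {a..b} - {z})"
    using f by (intro card_mono) auto
  also have "\<dots> < card (supp \<tau> - {a..b})" using card_Diff1_less[OF f assms(7)] .
  finally show ?thesis .
qed



lemma sum_shift:
  assumes "finite S" "supp \<tau> \<subseteq> S"
  shows "(\<Sum>y\<in>S. \<tau> y * (y - c)) = moment 1 \<tau> - c * moment 0 \<tau>"
proof -
  have "(\<Sum>y\<in>S. \<tau> y * (y - c)) = (\<Sum>y\<in>S. \<tau> y * y ^ 1) - c * (\<Sum>y\<in>S. \<tau> y * y ^ 0)"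
    by (simp add: sum_subtractf sum_distrib_left right_diff_distrib mult.commute)
  then show ?thesis using moment_S[OF assms, of 1] moment_S[OF assms, of 0] by simp
qed

lemma core:
  assumes x: "a < x" "x < b" and dr: "distribution \<rho>"
  shows "distribution \<tau> \<Longrightarrow> (\<And>y. a < y \<Longrightarrow> y < b \<Longrightarrow> \<tau> y = 0) \<Longrightarrow> moment 0 \<tau> = m
    \<Longrightarrow> moment 1 \<tau> = m * x \<Longrightarrow> (\<lambda>y. \<rho> y + coll a b m x y) \<preceq>\<^sub>s (\<lambda>y. \<rho> y + \<tau> y)"
proof (induct "card (supp \<tau> - {a..b})" arbitrary: \<tau> rule: less_induct)
  case less
  have ab: "a < b" using x by simp
  have f: "finite (supp \<tau>)" and n: "\<And>y. 0 \<le> \<tau> y" using less.prems(1) by (auto simp: distribution_def)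
  have m0: "0 \<le> m" using less.prems(3) n unfolding moment_def by (auto intro: sum_nonneg)
  note cp = coll_props[OF x m0]
  define Out where "Out = supp \<tau> - {a..b}"
  have STEP: "(\<lambda>y. \<rho> y + coll a b m x y) \<preceq>\<^sub>s (\<lambda>y. \<rho> y + \<tau> y)"
    if h: "p \<noteq> q" "0 \<le> s" "0 \<le> t" "0 < s + t" "s \<le> \<tau> p" "t \<le> \<tau> q" "p * s + q * t = e * (s + t)"
      "e \<in> {a, b}" "\<not> (a < p \<and> p < b)" "\<not> (a < q \<and> q < b)" "z \<in> Out" "upd \<tau> p s q t e z = 0"
    for p s q t e z
  proof -
    let ?\<tau> = "upd \<tau> p s q t e"
    have d': "distribution ?\<tau>" by (rule upd_dist[OF less.prems(1) h(1-3,5,6)])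
    have i': "?\<tau> y = 0" if "a < y" "y < b" for y
      using that h(8-10) less.prems(2)[OF that] by (auto simp: upd_def pt_def)
    have mo: "moment 0 ?\<tau> = m" "moment 1 ?\<tau> = m * x"
      using upd_moment[OF f h(7)] less.prems(3,4) by auto
    have "e \<in> {a..b}" using h(8) ab by auto
    then have c': "card (supp ?\<tau> - {a..b}) < card (supp \<tau> - {a..b})"
      using upd_card[OF less.prems(1) h(3,6,2,5)] h(11,12) Out_def by blast
    have "(\<lambda>y. \<rho> y + coll a b m x y) \<preceq>\<^sub>s (\<lambda>y. \<rho> y + ?\<tau> y)"
      using less.hyps[OF c' d' i' mo] by blast
    moreover have "(\<lambda>y. \<rho> y + ?\<tau> y) \<preceq>\<^sub>s (\<lambda>y. \<rho> y + \<tau> y)"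
      by (rule upd_step[OF dr less.prems(1) h(1-7)])
    ultimately show ?thesis by (rule split_le_trans)
  qed
  show ?case
  proof (cases "Out = {}")
    case True
    define g where "g = (\<lambda>y. \<tau> y - coll a b m x y)"
    have fc: "finite (supp (coll a b m x))" using cp(1) by (simp add: distribution_def)
    have "g y = 0" for y
    proof (rule two_point_zero[OF ab, of g])
      show "finite (supp g)" unfolding g_def by (intro fin_diff f fc)
      show "g y = 0" if "y \<noteq> a" "y \<noteq> b" for y
      proof (cases "a < y \<and> y < b")
        case True then show ?thesis using less.prems(2) cp(4) by (simp add: g_def)
      next
        case False
        then have "y \<notin> {a..b}" using that by auto
        then have "\<tau> y = 0" using \<open>Out = {}\<close> by (auto simp: Out_def supp_def)
        then show ?thesis using that by (simp add: g_def coll_def pt_def)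
      qed
      show "moment 0 g = 0" unfolding g_def using f fc cp(2) less.prems(3) by (simp add: moment_diff)
      show "moment 1 g = 0" unfolding g_def using f fc cp(3) less.prems(4) by (simp add: moment_diff)
    qed
    then have "\<tau> = coll a b m x" by (auto simp: g_def)
    then show ?thesis by (simp add: split_le_refl)
  next
    case False
    show ?thesis
    proof (cases "\<exists>c\<in>Out. c < a")
      case True
      then obtain c where c: "c \<in> Out" "c < a" by blast
      define w where "w = \<tau> c"
      have w: "0 < w" using c n[of c] by (auto simp: Out_def supp_def w_def)
      show ?thesis
      proof (cases "\<exists>d\<in>Out. b < d")
        case True
        then obtain d where d: "d \<in> Out" "b < d" by blast
        define z where "z = \<tau> d"
        have z: "0 < z" using d n[of d] by (auto simp: Out_def supp_def z_def)
        have cd: "c \<noteq> d" "c \<noteq> a" "d \<noteq> a" using c d ab by auto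
        show ?thesis
        proof (cases "w * (a - c) \<le> z * (d - a)")
          case True
          define t where "t = w * (a - c) / (d - a)"
          have t: "0 \<le> t" "t \<le> z" using True c d ab w by (auto simp: t_def pos_divide_le_eq)
          have eq: "c * w + d * t = a * (w + t)" using c d ab by (simp add: t_def field_simps)
          show ?thesis
            by (rule STEP[of c d w t a c]) (use cd c d w t eq ab in \<open>auto simp: w_def z_def upd_def pt_def\<close>)
        next
          case False
          define s where "s = z * (d - a) / (a - c)"
          have s: "0 \<le> s" "s \<le> w" using False c d ab z by (auto simp: s_def pos_divide_le_eq)
          have eq: "c * s + d * z = a * (s + z)" using c d ab by (simp add: s_def field_simps)
          show ?thesis
            by (rule STEP[of c d s z a d]) (use cd c d z s eq ab in \<open>auto simp: w_def z_def upd_def pt_def\<close>)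
        qed
      next
        case False
        let ?S = "supp \<tau> \<union> {b}"
        have fS: "finite ?S" using f by simp
        have sum1: "(\<Sum>y\<in>?S. \<tau> y * (y - a)) = m * x - a * m"
          using sum_shift[OF fS Un_upper1, of a] less.prems(3,4) by simp
        have cS: "c \<in> ?S" using c by (simp add: Out_def)
        have bS: "b \<in> ?S - {c}" using c ab by auto
        have "(\<Sum>y\<in>?S. \<tau> y * (y - a)) = \<tau> c * (c - a) + (\<Sum>y\<in>?S - {c}. \<tau> y * (y - a))"
          using sum.remove[OF fS cS] .
        also have "(\<Sum>y\<in>?S - {c}. \<tau> y * (y - a)) = \<tau> b * (b - a) + (\<Sum>y\<in>?S - {c} - {b}. \<tau> y * (y - a))"
          using sum.remove[OF _ bS] fS by simp
        also have "(\<Sum>y\<in>?S - {c} - {b}. \<tau> y * (y - a)) \<le> 0"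
        proof (rule sum_nonpos)
          fix y assume y: "y \<in> ?S - {c} - {b}"
          then have ys: "y \<in> supp \<tau>" by auto
          have "\<not> (a < y \<and> y < b)" using ys less.prems(2) by (auto simp: supp_def)
          moreover have "\<not> (b < y)" using False ys by (auto simp: Out_def)
          ultimately have "y \<le> a" using y by auto
          then show "\<tau> y * (y - a) \<le> 0" using n[of y] by (simp add: mult_nonneg_nonpos)
        qed
        finally have "m * x - a * m \<le> \<tau> c * (c - a) + \<tau> b * (b - a)" using sum1 by linarith
        moreover have "0 \<le> m * x - a * m"
          proof -
            have "0 \<le> m * (x - a)" using m0 x by simp
            then show ?thesis by (simp add: algebra_simps)
          qed
        ultimately have ineq: "w * (a - c) \<le> \<tau> b * (b - a)" by (simp add: w_def algebra_simps)
        define t where "t = w * (a - c) / (b - a)"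
        have t: "0 \<le> t" "t \<le> \<tau> b" using ineq c ab w by (auto simp: t_def pos_divide_le_eq)
        have eq: "c * w + b * t = a * (w + t)" using c ab by (simp add: t_def field_simps)
        show ?thesis
          by (rule STEP[of c b w t a c]) (use c w t eq ab in \<open>auto simp: w_def upd_def pt_def\<close>)
      qed
    next
      case nc: False
      then obtain d where d: "d \<in> Out" "b < d" using False by (force simp: Out_def)
      define z where "z = \<tau> d"
      have z: "0 < z" using d n[of d] by (auto simp: Out_def supp_def z_def)
      let ?S = "supp \<tau> \<union> {a}"
      have fS: "finite ?S" using f by simp
      have sum1: "(\<Sum>y\<in>?S. \<tau> y * (y - b)) = m * x - b * m"
        using sum_shift[OF fS Un_upper1, of b] less.prems(3,4) by simp
      have dS: "d \<in> ?S" using d by (simp add: Out_def)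
      have aS: "a \<in> ?S - {d}" using d ab by auto
      have r1: "(\<Sum>y\<in>?S. \<tau> y * (y - b)) = \<tau> d * (d - b) + (\<Sum>y\<in>?S - {d}. \<tau> y * (y - b))"
        using sum.remove[OF fS dS] .
      have r2: "(\<Sum>y\<in>?S - {d}. \<tau> y * (y - b)) = \<tau> a * (a - b) + (\<Sum>y\<in>?S - {d} - {a}. \<tau> y * (y - b))"
        using sum.remove[OF _ aS] fS by simp
      have r3: "0 \<le> (\<Sum>y\<in>?S - {d} - {a}. \<tau> y * (y - b))"
      proof (rule sum_nonneg)
        fix y assume y: "y \<in> ?S - {d} - {a}"
        then have ys: "y \<in> supp \<tau>" by auto
        have "\<not> (a < y \<and> y < b)" using ys less.prems(2) by (auto simp: supp_def)
        moreover have "\<not> (y < a)" using nc ys by (auto simp: Out_def)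
        ultimately have "b \<le> y" using y by auto
        then show "0 \<le> \<tau> y * (y - b)" using n[of y] by simp
      qed
      have "\<tau> d * (d - b) + \<tau> a * (a - b) \<le> m * x - b * m" using sum1 r1 r2 r3 by linarith
      moreover have "m * x - b * m \<le> 0"
      proof -
        have "m * (x - b) \<le> 0" using m0 x by (simp add: mult_nonneg_nonpos)
        then show ?thesis by (simp add: algebra_simps)
      qed
      ultimately have ineq: "z * (d - b) \<le> \<tau> a * (b - a)" by (simp add: z_def algebra_simps)
      define t where "t = z * (d - b) / (b - a)"
      have t: "0 \<le> t" "t \<le> \<tau> a" using ineq d ab z by (auto simp: t_def pos_divide_le_eq)
      have eq: "d * z + a * t = b * (z + t)" using d ab by (simp add: t_def field_simps)
      show ?thesis
        by (rule STEP[of d a z t b d]) (use d z t eq ab in \<open>auto simp: z_def upd_def pt_def\<close>)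
    qed
  qed
qed



lemma E_mono:
  assumes ab: "a < b" and bs: "basic_split \<mu> \<mu>1"
  shows "E a b \<mu> \<preceq>\<^sub>s E a b \<mu>1"
proof -
  obtain x \<nu> where d\<mu>: "distribution \<mu>" and mx: "0 < \<mu> x" and d\<nu>: "distribution \<nu>"
    and m0: "moment 0 \<nu> = \<mu> x" and m1: "moment 1 \<nu> = x * \<mu> x"
    and e: "\<mu>1 = (\<lambda>y. (if y = x then 0 else \<mu> y) + \<nu> y)"
    using bs unfolding basic_split_def by blast
  define m where "m = \<mu> x"
  define \<mu>0 where "\<mu>0 = (\<lambda>y. if y = x then 0 else \<mu> y)"
  have f\<mu>: "finite (supp \<mu>)" and n\<mu>: "\<And>y. 0 \<le> \<mu> y" using d\<mu> by (auto simp: distribution_def)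
  have d0: "distribution \<mu>0" unfolding distribution_def
    using n\<mu> by (auto simp: \<mu>0_def intro: finite_subset[OF _ f\<mu>] simp: supp_def)
  have f0: "finite (supp \<mu>0)" using d0 by (simp add: distribution_def)
  have f\<nu>: "finite (supp \<nu>)" using d\<nu> by (simp add: distribution_def)
  have e\<mu>: "\<mu> = (\<lambda>z. \<mu>0 z + pt x m z)" by (auto simp: \<mu>0_def pt_def m_def)
  have E1: "E a b \<mu> = (\<lambda>y. E a b \<mu>0 y + E a b (pt x m) y)"
    using E_add[OF f0 fin_pt, of a b x m] e\<mu> by simp
  have E2: "E a b \<mu>1 = (\<lambda>y. E a b \<mu>0 y + E a b \<nu> y)"
    using E_add[OF f0 f\<nu>, of a b] e \<mu>0_def by simp
  have d\<rho>: "distribution (E a b \<mu>0)" by (rule E_dist[OF ab d0])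
  have dE\<nu>: "distribution (E a b \<nu>)" by (rule E_dist[OF ab d\<nu>])
  have mE0: "moment 0 (E a b \<nu>) = m" using E_moment[OF ab f\<nu>, of 0] m0 m_def by simp
  have mE1: "moment 1 (E a b \<nu>) = m * x" using E_moment[OF ab f\<nu>, of 1] m1 m_def by simp
  show ?thesis
  proof (cases "a < x \<and> x < b")
    case True
    then have "E a b (pt x m) = coll a b m x" by (simp add: E_pt_in)
    moreover have "(\<lambda>y. E a b \<mu>0 y + coll a b m x y) \<preceq>\<^sub>s (\<lambda>y. E a b \<mu>0 y + E a b \<nu> y)"
      using core[of a x b "E a b \<mu>0" "E a b \<nu>" m] True d\<rho> dE\<nu> mE0 mE1 E_in by blast
    ultimately show ?thesis using E1 E2 by simp
  next
    case False
    then have "E a b (pt x m) = pt x m" by (simp add: E_pt_out)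
    moreover have "(\<lambda>y. E a b \<mu>0 y + pt x m y) \<preceq>\<^sub>s (\<lambda>y. E a b \<mu>0 y + E a b \<nu> y)"
      using split_point[OF d\<rho> dE\<nu> mE0 mE1] mx m_def by simp
    ultimately show ?thesis using E1 E2 by simp
  qed
qed

lemma E_chain:
  assumes ab: "a < b" and "\<mu> \<preceq>\<^sub>s \<mu>'"
  shows "E a b \<mu> \<preceq>\<^sub>s E a b \<mu>'"
  using assms(2) unfolding split_le_def
proof (induction rule: rtranclp_induct)
  case base then show ?case by simp
next
  case (step y z)
  then show ?case using E_mono[OF ab, of y z] unfolding split_le_def by simp
qed

theorem mainTheorem10:
  fixes \<mu> \<mu>' \<delta> \<mu>'' :: "real \<Rightarrow> real" and a b :: real
  assumes "distribution \<mu>"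
    and "\<mu> \<preceq>\<^sub>s \<mu>'"
    and "is_move a b \<delta>"
    and "move_applies \<delta> \<mu>"
    and "extreme_result a b \<mu>' \<mu>''"
  shows "apply_move \<delta> \<mu> \<preceq>\<^sub>s \<mu>''"
proof -
  have d\<mu>': "distribution \<mu>'" using split_le_dist assms(1,2) by blast
  have f\<mu>': "finite (supp \<mu>')" using d\<mu>' by (simp add: distribution_def)
  have f\<mu>: "finite (supp \<mu>)" using assms(1) by (simp add: distribution_def)
  have d\<mu>'': "distribution \<mu>''" using assms(5) by (simp add: extreme_result_def)
  have f\<mu>'': "finite (supp \<mu>'')" using d\<mu>'' by (simp add: distribution_def)
  have f\<delta>: "finite (supp \<delta>)" and s\<delta>: "supp \<delta> \<subseteq> {a..b}" and md: "moment 0 \<delta> = 0" "moment 1 \<delta> = 0"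
    using assms(3) by (auto simp: is_move_def signed_distribution_def)
  have ex: "\<And>x. a < x \<and> x < b \<longrightarrow> \<mu>'' x = 0" "\<And>x. x \<notin> {a..b} \<longrightarrow> \<mu>'' x = \<mu>' x"
    "moment 0 \<mu>'' = moment 0 \<mu>'" "moment 1 \<mu>'' = moment 1 \<mu>'"
    using assms(5) by (auto simp: extreme_result_def)
  show ?thesis
  proof (cases "a < b")
    case ab: True
    define \<sigma> where "\<sigma> = apply_move \<delta> \<mu>"
    have d\<sigma>: "distribution \<sigma>" using assms(4) by (simp add: \<sigma>_def move_applies_def apply_move_def)
    have s1: "\<sigma> \<preceq>\<^sub>s E a b \<sigma>" by (rule E_split[OF ab d\<sigma>])
    have E\<delta>: "E a b \<delta> y = 0" for y
    proof (rule two_point_zero[OF ab, of "E a b \<delta>"])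
      show "finite (supp (E a b \<delta>))" by (rule fin_E[OF f\<delta>])
      show "E a b \<delta> y = 0" if "y \<noteq> a" "y \<noteq> b" for y
      proof (cases "a < y \<and> y < b")
        case True then show ?thesis by (simp add: E_in)
      next
        case False
        then have "y \<notin> {a..b}" using that by auto
        then show ?thesis using E_out[OF ab] s\<delta> by (auto simp: supp_def)
      qed
      show "moment 0 (E a b \<delta>) = 0" using E_moment[OF ab f\<delta>, of 0] md by simp
      show "moment 1 (E a b \<delta>) = 0" using E_moment[OF ab f\<delta>, of 1] md by simp
    qed
    have "E a b \<sigma> = (\<lambda>y. E a b \<mu> y + E a b \<delta> y)"
      unfolding \<sigma>_def apply_move_def by (rule E_add[OF f\<mu> f\<delta>])
    then have s2: "E a b \<sigma> = E a b \<mu>" using E\<delta> by simp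
    have s3: "E a b \<mu> \<preceq>\<^sub>s E a b \<mu>'" by (rule E_chain[OF ab assms(2)])
    define g where "g = (\<lambda>y. \<mu>'' y - E a b \<mu>' y)"
    have "g y = 0" for y
    proof (rule two_point_zero[OF ab, of g])
      show "finite (supp g)" unfolding g_def by (intro fin_diff f\<mu>'' fin_E f\<mu>')
      show "g y = 0" if "y \<noteq> a" "y \<noteq> b" for y
      proof (cases "a < y \<and> y < b")
        case True then show ?thesis using ex(1) by (simp add: g_def E_in)
      next
        case False
        then have "y \<notin> {a..b}" using that by auto
        then show ?thesis using E_out[OF ab] ex(2) by (simp add: g_def)
      qed
      show "moment 0 g = 0" unfolding g_def using E_moment[OF ab f\<mu>', of 0] ex(3)
        by (simp add: moment_diff f\<mu>'' fin_E f\<mu>')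
      show "moment 1 g = 0" unfolding g_def using E_moment[OF ab f\<mu>', of 1] ex(4)
        by (simp add: moment_diff f\<mu>'' fin_E f\<mu>')
    qed
    then have s4: "E a b \<mu>' = \<mu>''" by (auto simp: g_def)
    show ?thesis using s1 s2 s3 s4 split_le_trans \<sigma>_def by metis
  next
    case False
    have sa: "supp \<delta> \<subseteq> {a}" using s\<delta> False by auto
    have "moment 0 \<delta> = \<delta> a" using moment_S[OF _ sa, of 0] by simp
    then have "\<delta> a = 0" using md by simp
    then have "\<delta> y = 0" for y using sa by (auto simp: supp_def)
    then have A: "apply_move \<delta> \<mu> = \<mu>" by (simp add: apply_move_def)
    define g where "g = (\<lambda>y. \<mu>'' y - \<mu>' y)"
    have sg: "supp g \<subseteq> {a}"
    proof
      fix y assume "y \<in> supp g"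
      then have "y \<in> {a..b}" using ex(2)[of y] by (auto simp: g_def supp_def)
      then show "y \<in> {a}" using False by auto
    qed
    have "moment 0 g = 0" unfolding g_def using ex(3) by (simp add: moment_diff f\<mu>'' f\<mu>')
    moreover have "moment 0 g = g a" using moment_S[OF _ sg, of 0] by simp
    ultimately have "g a = 0" by simp
    then have "g y = 0" for y using sg by (auto simp: supp_def)
    then have "\<mu>'' = \<mu>'" by (auto simp: g_def)
    then show ?thesis using A assms(2) by simp
  qed
qed

end
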